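(* Let $q\in\mathrm{prob}(\{0,1\}^2)$. The set $A:=\{(\pi_1,\chi^{(1)}_{0|0},\chi^{(1)}_{1|1},\chi^{(2)}_{0|0},\chi^{(2)}_{1|1}):(\pi,\chi)\in\Theta_2,\ \mu(\pi,\chi)=q\}$ is nonempty and equals the set of all $(\mathrm{Pr},\mathrm{Sp}_1,\mathrm{Se}_1,\mathrm{Sp}_2,\mathrm{Se}_2)\in[0,1]^5$ satisfying (a) $(1-\mathrm{Pr})(1-\mathrm{Sp}_1)+\mathrm{Pr}\,\mathrm{Se}_1=q_{1+}$, (b) $(1-\mathrm{Pr})(1-\mathrm{Sp}_2)+\mathrm{Pr}\,\mathrm{Se}_2=q_{+1}$, (c) $(1-\mathrm{Pr})\min\{\mathrm{Sp}_1,\mathrm{Sp}_2\}+\mathrm{Pr}\,(1-\max\{\mathrm{Se}_1,\mathrm{Se}_2\})\ge q_{00}$, (d) $(1-\mathrm{Pr})(\mathrm{Sp}_1+\mathrm{Sp}_2-1)^++\mathrm{Pr}\,(1-\mathrm{Se}_1-\mathrm{Se}_2)^+\le q_{00}$; equivalently, the set of all such quintuples in $[0,1]^5$ satisfying (e) $\mathrm{Pr}(\mathrm{Se}_2-\mathrm{Se}_1)=(1-\mathrm{Pr})(\mathrm{Sp}_2-\mathrm{Sp}_1)+q_{01}-q_{10}$, (f) $\mathrm{Pr}(\mathrm{Se}_1+\mathrm{Se}_2-1)=(1-\mathrm{Pr})(\mathrm{Sp}_1+\mathrm{Sp}_2-1)+q_{11}-q_{00}$, (g) $-q_{10}\le\mathrm{Pr}(\mathrm{Se}_2-\mathrm{Se}_1)\le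 q_{01}$, (h) $-q_{00}\le\mathrm{Pr}(\mathrm{Se}_1+\mathrm{Se}_2-1)\le q_{11}$.
   Context: $x^+:=\max\{x,0\}$. A subscript $+$ denotes summation over the replaced index, e.g. $q_{1+}=q_{10}+q_{11}$, $q_{+1}=q_{01}+q_{11}$. $\mathrm{prob}(\mathcal{X})$ is the set of probability densities on a finite set $\mathcal{X}$; $\mathrm{markov}(\mathcal{X},\mathcal{Y})$ the set of maps $(x,y)\mapsto p_{y|x}$ with $p_{\cdot|x}\in\mathrm{prob}(\mathcal{Y})$. $\Theta_2:=\mathrm{prob}(\{0,1\})\times\mathrm{markov}(\{0,1\},\{0,1\}^2)$, $\mu(\pi,\chi)_j:=\sum_{i=0}^1\pi_i\chi_{j|i}$ for $j\in\{0,1\}^2$, $\chi^{(1)}_{\iota|i}:=\chi_{\iota0|i}+\chi_{\iota1|i}$, $\chi^{(2)}_{\iota|i}:=\chi_{0\iota|i}+\chi_{1\iota|i}$. *)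

theory Defs
  imports Main Complex_Main
begin

definition prob :: "'a set \<Rightarrow> ('a \<Rightarrow> real) set" where
  "prob X = {p. (\<forall>x\<in>X. 0 \<le> p x) \<and> (\<forall>x. x \<notin> X \<longrightarrow> p x = 0) \<and> (\<Sum>x\<in>X. p x) = 1}"

text \<open>Markov kernels: chi x y = p_{y|x}, with chi x a density on Y for x in X
  (extensional: zero for x outside X).\<close>
definition markov :: "'a set \<Rightarrow> 'b set \<Rightarrow> ('a \<Rightarrow> 'b \<Rightarrow> real) set" where
  "markov X Y = {chi. (\<forall>x\<in>X. chi x \<in> prob Y) \<and> (\<forall>x. x \<notin> X \<longrightarrow> chi x = (\<lambda>_. 0))}"

definition bit :: "nat set" where "bit = {0, 1}"

definition Theta2 :: "((nat \<Rightarrow> real) \<times> (nat \<Rightarrow> nat \<times> nat \<Rightarrow> real)) set" where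
  "Theta2 = prob bit \<times> markov bit (bit \<times> bit)"

definition mu :: "(nat \<Rightarrow> real) \<Rightarrow> (nat \<Rightarrow> nat \<times> nat \<Rightarrow> real) \<Rightarrow> nat \<times> nat \<Rightarrow> real" where
  "mu \<pi> \<chi> j = (\<Sum>i\<in>bit. \<pi> i * \<chi> i j)"

text \<open>chi1 \<chi> \<iota> i = \<chi>^{(1)}_{\<iota>|i}, chi2 \<chi> \<iota> i = \<chi>^{(2)}_{\<iota>|i}.\<close>
definition chi1 :: "(nat \<Rightarrow> nat \<times> nat \<Rightarrow> real) \<Rightarrow> nat \<Rightarrow> nat \<Rightarrow> real" where
  "chi1 \<chi> \<iota> i = \<chi> i (\<iota>, 0) + \<chi> i (\<iota>, 1)"

definition chi2 :: "(nat \<Rightarrow> nat \<times> nat \<Rightarrow> real) \<Rightarrow> nat \<Rightarrow> nat \<Rightarrow> real" where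
  "chi2 \<chi> \<iota> i = \<chi> i (0, \<iota>) + \<chi> i (1, \<iota>)"

definition pos_part :: "real \<Rightarrow> real" where "pos_part x = max x 0"

end

theory Submission
  imports Defs
begin

lemma bit2_eq: "bit \<times> bit = {(0,0),(0,1),(1,0),(1,1)}"
  by (auto simp: bit_def)

lemma sum_bit2: "(\<Sum>x\<in>bit \<times> bit. f x) = f (0,0) + f (0,1) + f (1,0) + f (1,1)"
  unfolding bit2_eq by (simp add: add.assoc)

lemma sum_bit: "(\<Sum>x\<in>bit. f x) = f 0 + f 1"
  by (simp add: bit_def)

lemma prob_bit2: "p \<in> prob (bit \<times> bit) \<longleftrightarrow>
   p (0,0) \<ge> 0 \<and> p (0,1) \<ge> 0 \<and> p (1,0) \<ge> 0 \<and> p (1,1) \<ge> 0 \<and>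
   p (0,0) + p (0,1) + p (1,0) + p (1,1) = 1 \<and> (\<forall>x. x \<notin> bit \<times> bit \<longrightarrow> p x = 0)"
  unfolding prob_def sum_bit2 by (auto simp: bit2_eq)

lemma prob_bit: "p \<in> prob bit \<longleftrightarrow>
   p 0 \<ge> 0 \<and> p 1 \<ge> 0 \<and> p 0 + p 1 = 1 \<and> (\<forall>x. x \<notin> bit \<longrightarrow> p x = 0)"
  unfolding prob_def sum_bit by (auto simp: bit_def)

lemma interp:
  fixes p L0 U0 L1 U1 c :: real
  assumes "0 \<le> p" "p \<le> 1" "L0 \<le> U0" "L1 \<le> U1"
    "(1-p)*L0 + p*L1 \<le> c" "c \<le> (1-p)*U0 + p*U1"
  shows "\<exists>t s. L0 \<le> t \<and> t \<le> U0 \<and> L1 \<le> s \<and> s \<le> U1 \<and> (1-p)*t + p*s = c"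
proof -
  define lo where "lo = (1-p)*L0 + p*L1"
  define hi where "hi = (1-p)*U0 + p*U1"
  show ?thesis
  proof (cases "hi = lo")
    case True
    then show ?thesis using assms lo_def hi_def
      by (intro exI[of _ L0] exI[of _ L1]) auto
  next
    case False
    then have hl: "hi > lo" using assms lo_def hi_def by linarith
    define l where "l = (c - lo) / (hi - lo)"
    have l0: "0 \<le> l" "l \<le> 1" using hl assms lo_def hi_def by (auto simp: l_def field_simps)
    have eq: "l * (hi - lo) = c - lo" using hl by (simp add: l_def)
    have "(1-p)*(L0 + l*(U0-L0)) + p*(L1 + l*(U1-L1)) = lo + l*(hi-lo)"
      by (simp add: lo_def hi_def algebra_simps)
    also have "\<dots> = c" using eq by simp
    finally have e: "(1-p)*(L0 + l*(U0-L0)) + p*(L1 + l*(U1-L1)) = c" .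
    have "l*(U0-L0) \<ge> 0" "l*(U0-L0) \<le> U0-L0" "l*(U1-L1) \<ge> 0" "l*(U1-L1) \<le> U1-L1"
      using l0 assms by (auto simp: mult_left_le_one_le)
    then show ?thesis using e
      by (intro exI[of _ "L0 + l*(U0-L0)"] exI[of _ "L1 + l*(U1-L1)"]) auto
  qed
qed

lemma fwd:
  fixes p a00 a01 a10 a11 b00 b01 b10 b11 q00 q01 q10 q11 :: real
  assumes p: "0 \<le> p" "p \<le> 1"
    and a: "a00 \<ge> 0" "a01 \<ge> 0" "a10 \<ge> 0" "a11 \<ge> 0" "a00+a01+a10+a11 = 1"
    and b: "b00 \<ge> 0" "b01 \<ge> 0" "b10 \<ge> 0" "b11 \<ge> 0" "b00+b01+b10+b11 = 1"
    and q: "q00 = (1-p)*a00 + p*b00" "q01 = (1-p)*a01 + p*b01"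
           "q10 = (1-p)*a10 + p*b10" "q11 = (1-p)*a11 + p*b11"
  defines "u \<equiv> a00+a01" and "v \<equiv> b10+b11" and "w \<equiv> a00+a10" and "z \<equiv> b01+b11"
  shows "p \<in> {0..1} \<and> u \<in> {0..1} \<and> v \<in> {0..1} \<and> w \<in> {0..1} \<and> z \<in> {0..1} \<and>
             (1 - p) * (1 - u) + p * v = q10 + q11 \<and>
             (1 - p) * (1 - w) + p * z = q01 + q11 \<and>
             (1 - p) * min u w + p * (1 - max v z) \<ge> q00 \<and>
             (1 - p) * pos_part (u + w - 1) + p * pos_part (1 - v - z) \<le> q00"
proof -
  have r: "p \<in> {0..1} \<and> u \<in> {0..1} \<and> v \<in> {0..1} \<and> w \<in> {0..1} \<and> z \<in> {0..1}"
    using p a b by (auto simp: u_def v_def w_def z_def)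
  have e1: "1 - u = a10 + a11" "1 - w = a01 + a11" using a by (auto simp: u_def w_def)
  have ea: "(1 - p) * (1 - u) + p * v = q10 + q11"
    unfolding e1 q v_def by (simp add: algebra_simps)
  have eb: "(1 - p) * (1 - w) + p * z = q01 + q11"
    unfolding e1 q z_def by (simp add: algebra_simps)
  have m1: "min u w \<ge> a00" using a by (auto simp: u_def w_def)
  have m2: "1 - max v z \<ge> b00" using b by (auto simp: v_def z_def)
  have "(1 - p) * min u w \<ge> (1-p)*a00" using m1 p by (intro mult_left_mono) auto
  moreover have "p * (1 - max v z) \<ge> p * b00" using m2 p by (intro mult_left_mono) auto
  ultimately have ec: "(1 - p) * min u w + p * (1 - max v z) \<ge> q00" using q by linarith
  have n1: "pos_part (u + w - 1) \<le> a00" using a by (auto simp: u_def w_def pos_part_def)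
  have n2: "pos_part (1 - v - z) \<le> b00" using b by (auto simp: v_def z_def pos_part_def)
  have "(1 - p) * pos_part (u + w - 1) \<le> (1-p)*a00" using n1 p by (intro mult_left_mono) auto
  moreover have "p * pos_part (1 - v - z) \<le> p * b00" using n2 p by (intro mult_left_mono) auto
  ultimately have ed: "(1 - p) * pos_part (u + w - 1) + p * pos_part (1 - v - z) \<le> q00" using q by linarith
  show ?thesis using r ea eb ec ed by blast
qed

lemma bwd:
  fixes p u v w z q00 q01 q10 q11 :: real
  assumes r: "p \<in> {0..1}" "u \<in> {0..1}" "v \<in> {0..1}" "w \<in> {0..1}" "z \<in> {0..1}"
    and q: "q00+q01+q10+q11 = 1"
    and ea: "(1 - p) * (1 - u) + p * v = q10 + q11"
    and eb: "(1 - p) * (1 - w) + p * z = q01 + q11"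
    and ec: "(1 - p) * min u w + p * (1 - max v z) \<ge> q00"
    and ed: "(1 - p) * pos_part (u + w - 1) + p * pos_part (1 - v - z) \<le> q00"
  shows "\<exists>t s. t \<ge> 0 \<and> u - t \<ge> 0 \<and> w - t \<ge> 0 \<and> 1 - u - w + t \<ge> 0 \<and>
              s \<ge> 0 \<and> 1 - v - s \<ge> 0 \<and> 1 - z - s \<ge> 0 \<and> v + z - 1 + s \<ge> 0 \<and>
              q00 = (1-p)*t + p*s \<and> q01 = (1-p)*(u-t) + p*(1-v-s) \<and>
              q10 = (1-p)*(w-t) + p*(1-z-s) \<and> q11 = (1-p)*(1-u-w+t) + p*(v+z-1+s)"
proof -
  have "\<exists>t s. pos_part (u + w - 1) \<le> t \<and> t \<le> min u w \<and> pos_part (1 - v - z) \<le> s \<and> s \<le> 1 - max v z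
      \<and> (1-p)*t + p*s = q00"
    using r ec ed by (intro interp) (auto simp: pos_part_def)
  then obtain t s where ts: "pos_part (u + w - 1) \<le> t" "t \<le> min u w" "pos_part (1 - v - z) \<le> s"
     "s \<le> 1 - max v z" "(1-p)*t + p*s = q00" by blast
  have ineq: "t \<ge> 0 \<and> u - t \<ge> 0 \<and> w - t \<ge> 0 \<and> 1 - u - w + t \<ge> 0 \<and>
              s \<ge> 0 \<and> 1 - v - s \<ge> 0 \<and> 1 - z - s \<ge> 0 \<and> v + z - 1 + s \<ge> 0"
    using ts by (auto simp: pos_part_def)
  have x1: "(1-p)*(u-t) + p*(1-v-s) = q01"
  proof -
    have "(1-p)*(u-t) + p*(1-v-s) = 1 - ((1 - p) * (1 - u) + p * v) - ((1-p)*t + p*s)"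
      by (simp add: algebra_simps)
    then show ?thesis using ea ts(5) q by linarith
  qed
  have x2: "(1-p)*(w-t) + p*(1-z-s) = q10"
  proof -
    have "(1-p)*(w-t) + p*(1-z-s) = 1 - ((1 - p) * (1 - w) + p * z) - ((1-p)*t + p*s)"
      by (simp add: algebra_simps)
    then show ?thesis using eb ts(5) q by linarith
  qed
  have x3: "(1-p)*(1-u-w+t) + p*(v+z-1+s) = q11"
  proof -
    have "(1-p)*(1-u-w+t) + p*(v+z-1+s) = ((1 - p) * (1 - u) + p * v) + ((1 - p) * (1 - w) + p * z) - 1 + ((1-p)*t + p*s)"
      by (simp add: algebra_simps)
    then show ?thesis using ea eb ts(5) q by linarith
  qed
  show ?thesis using ineq x1 x2 x3 ts(5) by (intro exI[of _ t] exI[of _ s]) auto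
qed

lemma lin:
  fixes p u v w z U V W Z q00 q01 q10 q11 :: real
  assumes r: "0\<le>p" "p\<le>1" "0\<le>u" "u\<le>1" "0\<le>v" "v\<le>1" "0\<le>w" "w\<le>1" "0\<le>z" "z\<le>1"
   and m: "0\<le>U" "U\<le>p" "U\<le>u" "u-U\<le>1-p"
          "0\<le>V" "V\<le>p" "V\<le>v" "v-V\<le>1-p"
          "0\<le>W" "W\<le>p" "W\<le>w" "w-W\<le>1-p"
          "0\<le>Z" "Z\<le>p" "Z\<le>z" "z-Z\<le>1-p"
   and q: "q00\<ge>0" "q01\<ge>0" "q10\<ge>0" "q11\<ge>0" "q00+q01+q10+q11=1"
   and a: "1 - p - u + U + V = q10 + q11"
   and b: "1 - p - w + W + Z = q01 + q11"
  shows "(u - U + p - V \<ge> q00 \<and> u - U + p - Z \<ge> q00 \<and> w - W + p - V \<ge> q00 \<and> w - W + p - Z \<ge> q00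
          \<and> (u+w-1) - (U+W-p) + (p - V - Z) \<le> q00 \<and> (u+w-1) - (U+W-p) \<le> q00 \<and> (p - V - Z) \<le> q00)
  \<longleftrightarrow> (- q10 \<le> Z - V \<and> Z - V \<le> q01 \<and> - q00 \<le> V + Z - p \<and> V + Z - p \<le> q11)"
proof
  assume h: "(u - U + p - V \<ge> q00 \<and> u - U + p - Z \<ge> q00 \<and> w - W + p - V \<ge> q00 \<and> w - W + p - Z \<ge> q00
          \<and> (u+w-1) - (U+W-p) + (p - V - Z) \<le> q00 \<and> (u+w-1) - (U+W-p) \<le> q00 \<and> (p - V - Z) \<le> q00)"
  show "(- q10 \<le> Z - V \<and> Z - V \<le> q01 \<and> - q00 \<le> V + Z - p \<and> V + Z - p \<le> q11)"
    using h r m q a b by linarith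
next
  assume h: "(- q10 \<le> Z - V \<and> Z - V \<le> q01 \<and> - q00 \<le> V + Z - p \<and> V + Z - p \<le> q11)"
  show "(u - U + p - V \<ge> q00 \<and> u - U + p - Z \<ge> q00 \<and> w - W + p - V \<ge> q00 \<and> w - W + p - Z \<ge> q00
          \<and> (u+w-1) - (U+W-p) + (p - V - Z) \<le> q00 \<and> (u+w-1) - (U+W-p) \<le> q00 \<and> (p - V - Z) \<le> q00)"
    using h r m q a b by linarith
qed

lemma equiv:
  fixes p u v w z q00 q01 q10 q11 :: real
  assumes r: "p \<in> {0..1}" "u \<in> {0..1}" "v \<in> {0..1}" "w \<in> {0..1}" "z \<in> {0..1}"
   and q: "q00\<ge>0" "q01\<ge>0" "q10\<ge>0" "q11\<ge>0" "q00+q01+q10+q11=1"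
  shows "((1 - p) * (1 - u) + p * v = q10 + q11 \<and>
             (1 - p) * (1 - w) + p * z = q01 + q11 \<and>
             (1 - p) * min u w + p * (1 - max v z) \<ge> q00 \<and>
             (1 - p) * pos_part (u + w - 1) + p * pos_part (1 - v - z) \<le> q00)
  \<longleftrightarrow> (p * (z - v) = (1 - p) * (w - u) + q01 - q10 \<and>
             p * (v + z - 1) = (1 - p) * (u + w - 1) + q11 - q00 \<and>
             - q10 \<le> p * (z - v) \<and> p * (z - v) \<le> q01 \<and>
             - q00 \<le> p * (v + z - 1) \<and> p * (v + z - 1) \<le> q11)"
proof -
  have r': "0\<le>p" "p\<le>1" "0\<le>u" "u\<le>1" "0\<le>v" "v\<le>1" "0\<le>w" "w\<le>1" "0\<le>z" "z\<le>1"
    using r by auto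
  have m: "0\<le>p*u" "p*u\<le>p" "p*u\<le>u" "u-p*u\<le>1-p"
          "0\<le>p*v" "p*v\<le>p" "p*v\<le>v" "v-p*v\<le>1-p"
          "0\<le>p*w" "p*w\<le>p" "p*w\<le>w" "w-p*w\<le>1-p"
          "0\<le>p*z" "p*z\<le>p" "p*z\<le>z" "z-p*z\<le>1-p"
  proof -
    have k: "\<And>x. 0 \<le> x \<Longrightarrow> x \<le> 1 \<Longrightarrow> 0\<le>p*x \<and> p*x\<le>p \<and> p*x\<le>x \<and> x-p*x\<le>1-p"
    proof -
      fix x :: real assume "0 \<le> x" "x \<le> 1"
      then have "0 \<le> p*x" "p*x \<le> p" "p*x \<le> x" "0 \<le> (1-p)*(1-x)"
        using r' by (auto intro: mult_right_le_one_le mult_left_le_one_le)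
      then show "0\<le>p*x \<and> p*x\<le>p \<and> p*x\<le>x \<and> x-p*x\<le>1-p" by (simp add: algebra_simps)
    qed
    show "0\<le>p*u" "p*u\<le>p" "p*u\<le>u" "u-p*u\<le>1-p"
          "0\<le>p*v" "p*v\<le>p" "p*v\<le>v" "v-p*v\<le>1-p"
          "0\<le>p*w" "p*w\<le>p" "p*w\<le>w" "w-p*w\<le>1-p"
          "0\<le>p*z" "p*z\<le>p" "p*z\<le>z" "z-p*z\<le>1-p"
      using k[of u] k[of v] k[of w] k[of z] r' by auto
  qed
  have ea: "(1 - p) * (1 - u) + p * v = 1 - p - u + p*u + p*v" by (simp add: algebra_simps)
  have eb: "(1 - p) * (1 - w) + p * z = 1 - p - w + p*w + p*z" by (simp add: algebra_simps)
  have ee: "p * (z - v) = p*z - p*v" "(1 - p) * (w - u) = w - p*w - u + p*u"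
    "p * (v + z - 1) = p*v + p*z - p" "(1 - p) * (u + w - 1) = (u+w-1) - (p*u+p*w-p)"
    by (simp_all add: algebra_simps)
  have ec: "(1 - p) * min u w + p * (1 - max v z) \<ge> q00 \<longleftrightarrow>
     (u - p*u + p - p*v \<ge> q00 \<and> u - p*u + p - p*z \<ge> q00 \<and> w - p*w + p - p*v \<ge> q00 \<and> w - p*w + p - p*z \<ge> q00)"
  proof -
    have s: "(1-p)*x + p*(1-y) = x - p*x + p - p*y" for x y by (simp add: algebra_simps)
    have mu: "(1-p)*min u w = min ((1-p)*u) ((1-p)*w)" using r' by (simp add: min_mult_distrib_left)
    have mv: "p*(1 - max v z) = min (p*(1-v)) (p*(1-z))"
    proof -
      have "1 - max v z = min (1-v) (1-z)" by (simp add: max_def min_def)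
      then show ?thesis using r' by (simp add: min_mult_distrib_left)
    qed
    have ms: "c \<le> min a b + min x y \<longleftrightarrow> c \<le> a+x \<and> c\<le>a+y \<and> c\<le>b+x \<and> c\<le>b+y" for a b c x y :: real
      by (auto simp: min_def)
    show ?thesis unfolding mu mv ms s by (rule refl)
  qed
  have ed: "(1 - p) * pos_part (u + w - 1) + p * pos_part (1 - v - z) \<le> q00 \<longleftrightarrow>
     ((u+w-1) - (p*u+p*w-p) + (p - p*v - p*z) \<le> q00 \<and> (u+w-1) - (p*u+p*w-p) \<le> q00 \<and> (p - p*v - p*z) \<le> q00 \<and> 0 \<le> q00)"
  proof -
    have mu: "(1 - p) * pos_part (u + w - 1) = max ((u+w-1) - (p*u+p*w-p)) 0"
      using r' by (simp add: pos_part_def max_mult_distrib_left algebra_simps)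
    have mv: "p * pos_part (1 - v - z) = max (p - p*v - p*z) 0"
      using r' by (simp add: pos_part_def max_mult_distrib_left algebra_simps)
    have ms: "max a 0 + max b 0 \<le> c \<longleftrightarrow> a + b \<le> c \<and> a \<le> c \<and> b \<le> c \<and> 0 \<le> c" for a b c :: real
      by (auto simp: max_def)
    show ?thesis unfolding mu mv ms by (rule refl)
  qed
  show ?thesis
    unfolding ea eb ec ed ee
    using lin[OF r' m q] q by (smt (verit))
qed

lemma Theta2_D:
  assumes "(\<pi>, \<chi>) \<in> Theta2"
  shows "\<pi> 0 \<ge> 0" "\<pi> 1 \<ge> 0" "\<pi> 0 + \<pi> 1 = 1"
    "\<chi> 0 (0,0) \<ge> 0" "\<chi> 0 (0,1) \<ge> 0" "\<chi> 0 (1,0) \<ge> 0" "\<chi> 0 (1,1) \<ge> 0"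
    "\<chi> 0 (0,0) + \<chi> 0 (0,1) + \<chi> 0 (1,0) + \<chi> 0 (1,1) = 1"
    "\<chi> 1 (0,0) \<ge> 0" "\<chi> 1 (0,1) \<ge> 0" "\<chi> 1 (1,0) \<ge> 0" "\<chi> 1 (1,1) \<ge> 0"
    "\<chi> 1 (0,0) + \<chi> 1 (0,1) + \<chi> 1 (1,0) + \<chi> 1 (1,1) = 1"
proof -
  have p: "\<pi> \<in> prob bit" and m: "\<chi> \<in> markov bit (bit \<times> bit)" using assms by (auto simp: Theta2_def)
  have c0: "\<chi> 0 \<in> prob (bit \<times> bit)" and c1: "\<chi> 1 \<in> prob (bit \<times> bit)"
    using m by (auto simp: markov_def bit_def)
  show "\<pi> 0 \<ge> 0" "\<pi> 1 \<ge> 0" "\<pi> 0 + \<pi> 1 = 1" using p by (auto simp: prob_bit)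
  show "\<chi> 0 (0,0) \<ge> 0" "\<chi> 0 (0,1) \<ge> 0" "\<chi> 0 (1,0) \<ge> 0" "\<chi> 0 (1,1) \<ge> 0"
    "\<chi> 0 (0,0) + \<chi> 0 (0,1) + \<chi> 0 (1,0) + \<chi> 0 (1,1) = 1" using c0 by (auto simp: prob_bit2)
  show "\<chi> 1 (0,0) \<ge> 0" "\<chi> 1 (0,1) \<ge> 0" "\<chi> 1 (1,0) \<ge> 0" "\<chi> 1 (1,1) \<ge> 0"
    "\<chi> 1 (0,0) + \<chi> 1 (0,1) + \<chi> 1 (1,0) + \<chi> 1 (1,1) = 1" using c1 by (auto simp: prob_bit2)
qed

lemma mu_eq: "mu \<pi> \<chi> x = \<pi> 0 * \<chi> 0 x + \<pi> 1 * \<chi> 1 x"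
  by (simp add: mu_def sum_bit)

theorem lemma3:
  fixes q :: "nat \<times> nat \<Rightarrow> real"
  assumes "q \<in> prob (bit \<times> bit)"
  defines "A \<equiv> {(\<pi> 1, chi1 \<chi> 0 0, chi1 \<chi> 1 1, chi2 \<chi> 0 0, chi2 \<chi> 1 1) | \<pi> \<chi>.
                  (\<pi>, \<chi>) \<in> Theta2 \<and> mu \<pi> \<chi> = q}"
  shows "A \<noteq> {}
    \<and> A = {(Pr, Sp1, Se1, Sp2, Se2).
             Pr \<in> {0..1} \<and> Sp1 \<in> {0..1} \<and> Se1 \<in> {0..1} \<and> Sp2 \<in> {0..1} \<and> Se2 \<in> {0..1} \<and>
             (1 - Pr) * (1 - Sp1) + Pr * Se1 = q (1,0) + q (1,1) \<and>
             (1 - Pr) * (1 - Sp2) + Pr * Se2 = q (0,1) + q (1,1) \<and>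
             (1 - Pr) * min Sp1 Sp2 + Pr * (1 - max Se1 Se2) \<ge> q (0,0) \<and>
             (1 - Pr) * pos_part (Sp1 + Sp2 - 1) + Pr * pos_part (1 - Se1 - Se2) \<le> q (0,0)}
    \<and> A = {(Pr, Sp1, Se1, Sp2, Se2).
             Pr \<in> {0..1} \<and> Sp1 \<in> {0..1} \<and> Se1 \<in> {0..1} \<and> Sp2 \<in> {0..1} \<and> Se2 \<in> {0..1} \<and>
             Pr * (Se2 - Se1) = (1 - Pr) * (Sp2 - Sp1) + q (0,1) - q (1,0) \<and>
             Pr * (Se1 + Se2 - 1) = (1 - Pr) * (Sp1 + Sp2 - 1) + q (1,1) - q (0,0) \<and>
             - q (1,0) \<le> Pr * (Se2 - Se1) \<and> Pr * (Se2 - Se1) \<le> q (0,1) \<and>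
             - q (0,0) \<le> Pr * (Se1 + Se2 - 1) \<and> Pr * (Se1 + Se2 - 1) \<le> q (1,1)}"

proof -
  have qp: "q (0,0) \<ge> 0" "q (0,1) \<ge> 0" "q (1,0) \<ge> 0" "q (1,1) \<ge> 0"
    "q (0,0) + q (0,1) + q (1,0) + q (1,1) = 1" "\<And>x. x \<notin> bit \<times> bit \<Longrightarrow> q x = 0"
    using assms(1) by (auto simp: prob_bit2)
  define B1 where "B1 = {(Pr, Sp1, Se1, Sp2, Se2).
             Pr \<in> {0..1} \<and> Sp1 \<in> {0..1} \<and> Se1 \<in> {0..1} \<and> Sp2 \<in> {0..1} \<and> Se2 \<in> {0..1} \<and>
             (1 - Pr) * (1 - Sp1) + Pr * Se1 = q (1,0) + q (1,1) \<and>
             (1 - Pr) * (1 - Sp2) + Pr * Se2 = q (0,1) + q (1,1) \<and>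
             (1 - Pr) * min Sp1 Sp2 + Pr * (1 - max Se1 Se2) \<ge> q (0,0) \<and>
             (1 - Pr) * pos_part (Sp1 + Sp2 - 1) + Pr * pos_part (1 - Se1 - Se2) \<le> q (0,0)}"
  define B2 where "B2 = {(Pr, Sp1, Se1, Sp2, Se2).
             Pr \<in> {0..1} \<and> Sp1 \<in> {0..1} \<and> Se1 \<in> {0..1} \<and> Sp2 \<in> {0..1} \<and> Se2 \<in> {0..1} \<and>
             Pr * (Se2 - Se1) = (1 - Pr) * (Sp2 - Sp1) + q (0,1) - q (1,0) \<and>
             Pr * (Se1 + Se2 - 1) = (1 - Pr) * (Sp1 + Sp2 - 1) + q (1,1) - q (0,0) \<and>
             - q (1,0) \<le> Pr * (Se2 - Se1) \<and> Pr * (Se2 - Se1) \<le> q (0,1) \<and>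
             - q (0,0) \<le> Pr * (Se1 + Se2 - 1) \<and> Pr * (Se1 + Se2 - 1) \<le> q (1,1)}"
  have B12: "B1 = B2"
  proof (rule set_eqI)
    fix x :: "real \<times> real \<times> real \<times> real \<times> real"
    obtain p u v w z where x: "x = (p,u,v,w,z)" by (cases x) auto
    show "x \<in> B1 \<longleftrightarrow> x \<in> B2"
    proof (cases "p \<in> {0..1} \<and> u \<in> {0..1} \<and> v \<in> {0..1} \<and> w \<in> {0..1} \<and> z \<in> {0..1}")
      case True
      then have r: "p \<in> {0..1}" "u \<in> {0..1}" "v \<in> {0..1}" "w \<in> {0..1}" "z \<in> {0..1}" by auto
      show ?thesis unfolding x B1_def B2_def
        using equiv[OF r qp(1-5)] True by simp
    next
      case False
      then show ?thesis unfolding x B1_def B2_def by auto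
    qed
  qed
  have AB1: "A \<subseteq> B1"
  proof
    fix x assume "x \<in> A"
    then obtain \<pi> \<chi> where x: "x = (\<pi> 1, chi1 \<chi> 0 0, chi1 \<chi> 1 1, chi2 \<chi> 0 0, chi2 \<chi> 1 1)"
      and th: "(\<pi>, \<chi>) \<in> Theta2" and mq: "mu \<pi> \<chi> = q" unfolding A_def by blast
    note D = Theta2_D[OF th]
    have qe: "q y = (1 - \<pi> 1) * \<chi> 0 y + \<pi> 1 * \<chi> 1 y" for y
      using mq[symmetric] D(3) by (simp add: mu_eq)
    have "\<pi> 1 \<le> 1" using D by linarith
    from fwd[OF D(2) this D(4-13) qe qe qe qe]
    show "x \<in> B1" unfolding x B1_def chi1_def chi2_def by simp
  qed
  have B1A: "B1 \<subseteq> A"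
  proof
    fix x assume xB: "x \<in> B1"
    obtain p u v w z where x: "x = (p,u,v,w,z)" by (cases x) auto
    have r: "p \<in> {0..1}" "u \<in> {0..1}" "v \<in> {0..1}" "w \<in> {0..1}" "z \<in> {0..1}"
      and c: "(1 - p) * (1 - u) + p * v = q (1,0) + q (1,1)"
        "(1 - p) * (1 - w) + p * z = q (0,1) + q (1,1)"
        "(1 - p) * min u w + p * (1 - max v z) \<ge> q (0,0)"
        "(1 - p) * pos_part (u + w - 1) + p * pos_part (1 - v - z) \<le> q (0,0)"
      using xB unfolding x B1_def by auto
    obtain t s where ts: "t \<ge> 0" "u - t \<ge> 0" "w - t \<ge> 0" "1 - u - w + t \<ge> 0"
              "s \<ge> 0" "1 - v - s \<ge> 0" "1 - z - s \<ge> 0" "v + z - 1 + s \<ge> 0"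
              "q (0,0) = (1-p)*t + p*s" "q (0,1) = (1-p)*(u-t) + p*(1-v-s)"
              "q (1,0) = (1-p)*(w-t) + p*(1-z-s)" "q (1,1) = (1-p)*(1-u-w+t) + p*(v+z-1+s)"
      using bwd[OF r qp(5) c] by blast
    define f0 :: "nat \<times> nat \<Rightarrow> real" where "f0 y = (if y = (0,0) then t else if y = (0,1) then u - t
       else if y = (1,0) then w - t else if y = (1,1) then 1 - u - w + t else 0)" for y
    define f1 :: "nat \<times> nat \<Rightarrow> real" where "f1 y = (if y = (0,0) then s else if y = (0,1) then 1 - v - s
       else if y = (1,0) then 1 - z - s else if y = (1,1) then v + z - 1 + s else 0)" for y
    define \<pi> :: "nat \<Rightarrow> real" where "\<pi> i = (if i = 0 then 1 - p else if i = 1 then p else 0)" for i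
    define \<chi> :: "nat \<Rightarrow> nat \<times> nat \<Rightarrow> real" where
      "\<chi> i = (if i = 0 then f0 else if i = 1 then f1 else (\<lambda>_. 0))" for i
    have f0p: "f0 \<in> prob (bit \<times> bit)" unfolding prob_bit2 using ts
      by (auto simp: f0_def bit_def)
    have f1p: "f1 \<in> prob (bit \<times> bit)" unfolding prob_bit2 using ts
      by (auto simp: f1_def bit_def)
    have pp: "\<pi> \<in> prob bit" unfolding prob_bit using r by (auto simp: \<pi>_def bit_def)
    have th: "(\<pi>, \<chi>) \<in> Theta2"
      unfolding Theta2_def markov_def using pp f0p f1p
      by (auto simp: \<chi>_def bit_def)
    have mq: "mu \<pi> \<chi> = q"
    proof
      fix y :: "nat \<times> nat"
      show "mu \<pi> \<chi> y = q y"
      proof (cases "y \<in> bit \<times> bit")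
        case True
        then have "y = (0,0) \<or> y = (0,1) \<or> y = (1,0) \<or> y = (1,1)" by (auto simp: bit2_eq)
        then show ?thesis using ts(9-12)
          by (auto simp: mu_eq \<pi>_def \<chi>_def f0_def f1_def)
      next
        case False
        then have "y \<noteq> (0,0)" "y \<noteq> (0,1)" "y \<noteq> (1,0)" "y \<noteq> (1,1)" by (auto simp: bit2_eq)
        then show ?thesis using qp(6)[OF False]
          by (simp add: mu_eq \<pi>_def \<chi>_def f0_def f1_def)
      qed
    qed
    have "x = (\<pi> 1, chi1 \<chi> 0 0, chi1 \<chi> 1 1, chi2 \<chi> 0 0, chi2 \<chi> 1 1)"
      unfolding x by (simp add: \<pi>_def \<chi>_def chi1_def chi2_def f0_def f1_def)
    then show "x \<in> A" unfolding A_def using th mq by blast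
  qed
  have ne: "A \<noteq> {}"
  proof -
    define \<pi> :: "nat \<Rightarrow> real" where "\<pi> i = (if i = 0 then 1 else 0)" for i
    define \<chi> :: "nat \<Rightarrow> nat \<times> nat \<Rightarrow> real" where
      "\<chi> i = (if i \<in> bit then q else (\<lambda>_. 0))" for i
    have pp: "\<pi> \<in> prob bit" unfolding prob_bit by (auto simp: \<pi>_def bit_def)
    have th: "(\<pi>, \<chi>) \<in> Theta2"
      unfolding Theta2_def markov_def using assms(1) pp
      by (auto simp: \<chi>_def)
    have mq: "mu \<pi> \<chi> = q"
      by (rule ext) (simp add: mu_eq \<pi>_def \<chi>_def bit_def)
    show ?thesis unfolding A_def using th mq by blast
  qed
  have AB: "A = B1" using AB1 B1A by blast
  have AB2: "A = B2" using AB B12 by simp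
  show ?thesis by (intro conjI ne AB[unfolded B1_def] AB2[unfolded B2_def])
qed

end
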